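(* Let $K$ be a compact Hausdorff space, $I$ a set, and $S:c_0(I)\to C(K)$ a linear isometric embedding. Let $\{\xi_i:i\in I\}\subseteq C(K)$ be the image under $S$ of the canonical unit vector basis of $c_0(I)$ and set $G=\bigcap_{i\in I}\xi_i^{-1}(0)$. Then the image of $S$ is complemented in $C(K|G)$.
   Context: $C(K)$ is the Banach space of real-valued continuous functions on $K$ with the supremum norm; for a closed $G\subseteq K$, $C(K|G)$ denotes the closed subspace of functions in $C(K)$ vanishing on $G$. *)

theory Defs
  imports "HOL-Analysis.Analysis"
begin

definition c0 :: "'i set \<Rightarrow> ('i \<Rightarrow> real) set" where
  "c0 I = {x. (\<forall>i. i \<notin> I \<longrightarrow> x i = 0) \<and>
              (\<forall>e>0. finite {i\<in>I. e \<le> \<bar>x i\<bar>})}"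

text \<open>Supremum norm on c_0(I) (entries outside I are 0, so the sup over UNIV is the
sup over I, and it is 0 when I is empty).\<close>
definition c0_norm :: "('i \<Rightarrow> real) \<Rightarrow> real" where
  "c0_norm x = (SUP i. \<bar>x i\<bar>)"

definition unit_vec :: "'i \<Rightarrow> 'i \<Rightarrow> real" where
  "unit_vec i = (\<lambda>j. if j = i then 1 else 0)"

text \<open>C(K|G): continuous functions on K vanishing on G (K compact, so C(K) = bcontfun).\<close>
definition CKG :: "'a::topological_space set \<Rightarrow> ('a, real) bcontfun set" where
  "CKG G = {f. \<forall>t\<in>G. apply_bcontfun f t = 0}"

definition complemented_in :: "('a::topological_space, real) bcontfun set \<Rightarrow> ('a, real) bcontfun set \<Rightarrow> bool" where
  "complemented_in Y Z \<longleftrightarrow> Y \<subseteq> Z \<and>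
     (\<exists>P. (\<forall>f\<in>Z. \<forall>g\<in>Z. P (f + g) = P f + P g) \<and>
          (\<forall>c. \<forall>f\<in>Z. P (c *\<^sub>R f) = c *\<^sub>R P f) \<and>
          (\<exists>B. \<forall>f\<in>Z. norm (P f) \<le> B * norm f) \<and>
          P ` Z \<subseteq> Y \<and> (\<forall>f\<in>Y. P f = f))"

end

theory Submission
  imports Defs
begin

lemma c0_finsupp:
  assumes "finite F" "F \<subseteq> I" "\<And>i. i \<notin> F \<Longrightarrow> x i = 0"
  shows "x \<in> c0 I"
  unfolding c0_def
proof (intro CollectI conjI allI impI)
  fix i assume "i \<notin> I" thus "x i = 0" using assms by auto
next
  fix e :: real assume "e > 0"
  have "{i\<in>I. e \<le> \<bar>x i\<bar>} \<subseteq> F" using assms \<open>e>0\<close> by force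
  thus "finite {i\<in>I. e \<le> \<bar>x i\<bar>}" using assms(1) finite_subset by blast
qed

lemma unit_vec_c0: "i \<in> I \<Longrightarrow> unit_vec i \<in> c0 I"
  by (rule c0_finsupp[of "{i}"]) (auto simp: unit_vec_def)

lemma c0_add:
  assumes "x \<in> c0 I" "y \<in> c0 I"
  shows "(\<lambda>i. x i + y i) \<in> c0 I"
  unfolding c0_def
proof (intro CollectI conjI allI impI)
  fix i assume "i \<notin> I" thus "x i + y i = 0" using assms by (auto simp: c0_def)
next
  fix e :: real assume "e > 0"
  have "{i\<in>I. e \<le> \<bar>x i + y i\<bar>} \<subseteq> {i\<in>I. e/2 \<le> \<bar>x i\<bar>} \<union> {i\<in>I. e/2 \<le> \<bar>y i\<bar>}"
    by auto
  moreover have "finite {i\<in>I. e/2 \<le> \<bar>x i\<bar>}" "finite {i\<in>I. e/2 \<le> \<bar>y i\<bar>}"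
  proof -
    have h: "e/2 > 0" using \<open>e>0\<close> by simp
    show "finite {i\<in>I. e/2 \<le> \<bar>x i\<bar>}" "finite {i\<in>I. e/2 \<le> \<bar>y i\<bar>}"
      using assms h unfolding c0_def mem_Collect_eq by blast+
  qed
  ultimately show "finite {i\<in>I. e \<le> \<bar>x i + y i\<bar>}" by (meson finite_UnI finite_subset)
qed

lemma c0_scale:
  assumes "x \<in> c0 I"
  shows "(\<lambda>i. c * x i) \<in> c0 I"
proof (cases "c = 0")
  case True thus ?thesis by (intro c0_finsupp[of "{}"]) auto
next
  case False
  show ?thesis unfolding c0_def
  proof (intro CollectI conjI allI impI)
    fix i assume "i \<notin> I" thus "c * x i = 0" using assms by (auto simp: c0_def)
  next
    fix e :: real assume "e > 0"
    have "{i\<in>I. e \<le> \<bar>c * x i\<bar>} = {i\<in>I. e / \<bar>c\<bar> \<le> \<bar>x i\<bar>}"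
      using False by (auto simp: abs_mult field_simps)
    moreover have "finite {i\<in>I. e / \<bar>c\<bar> \<le> \<bar>x i\<bar>}"
      using assms \<open>e>0\<close> False by (auto simp: c0_def)
    ultimately show "finite {i\<in>I. e \<le> \<bar>c * x i\<bar>}" by simp
  qed
qed

lemma c0_norm_le: "(\<And>i. \<bar>x i\<bar> \<le> e) \<Longrightarrow> c0_norm x \<le> e"
  unfolding c0_norm_def by (rule cSUP_least) auto

lemma c0_norm_ge: "(\<And>i. \<bar>x i\<bar> \<le> b) \<Longrightarrow> \<bar>x j\<bar> \<le> c0_norm x"
  unfolding c0_norm_def by (rule cSUP_upper) (auto intro: bdd_aboveI2[where M=b])

lemma c0_eval_fin:
  assumes add: "\<And>x y. x\<in>c0 I \<Longrightarrow> y\<in>c0 I \<Longrightarrow> \<phi> (\<lambda>i. x i + y i) = \<phi> x + \<phi> y"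
    and scale: "\<And>c x. x\<in>c0 I \<Longrightarrow> \<phi> (\<lambda>i. c * x i) = c * \<phi> x"
    and unit: "\<And>j. j\<in>I \<Longrightarrow> \<phi> (unit_vec j) = (if j = k then c else 0)"
  shows "finite F \<Longrightarrow> F \<subseteq> I \<Longrightarrow> (\<forall>i. i \<notin> F \<longrightarrow> x i = 0) \<Longrightarrow>
     \<phi> x = (if k \<in> F then x k * c else 0)"
proof (induction F arbitrary: x rule: finite_induct)
  case empty
  have z: "(\<lambda>i::'a. 0::real) \<in> c0 I" by (rule c0_finsupp[of "{}"]) auto
  have "x = (\<lambda>i. 0 * (0::real))" using empty by auto
  then have "\<phi> x = 0 * \<phi> (\<lambda>i. 0)" using scale[OF z, of 0] by simp
  thus ?case by simp
next
  case (insert a F)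
  define x' where "x' = (\<lambda>i. if i = a then 0 else x i)"
  have x'c: "x' \<in> c0 I" using insert by (intro c0_finsupp[of F]) (auto simp: x'_def)
  have ua: "unit_vec a \<in> c0 I" using insert by (intro unit_vec_c0) auto
  have IH: "\<phi> x' = (if k \<in> F then x' k * c else 0)"
    using insert by (intro insert.IH) (auto simp: x'_def)
  have "x = (\<lambda>i. x' i + x a * unit_vec a i)"
    by (auto simp: x'_def unit_vec_def)
  then have "\<phi> x = \<phi> x' + x a * \<phi> (unit_vec a)"
    using add[OF x'c c0_scale[OF ua]] scale[OF ua] by metis
  also have "\<dots> = (if k \<in> insert a F then x k * c else 0)"
    using IH unit[of a] insert by (auto simp: x'_def)
  finally show ?case .
qed

lemma c0_eval:
  assumes add: "\<And>x y. x\<in>c0 I \<Longrightarrow> y\<in>c0 I \<Longrightarrow> \<phi> (\<lambda>i. x i + y i) = \<phi> x + \<phi> y"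
    and scale: "\<And>c x. x\<in>c0 I \<Longrightarrow> \<phi> (\<lambda>i. c * x i) = c * \<phi> x"
    and bnd: "\<And>x. x \<in> c0 I \<Longrightarrow> \<bar>\<phi> x\<bar> \<le> c0_norm x"
    and unit: "\<And>j. j\<in>I \<Longrightarrow> \<phi> (unit_vec j) = (if j = k then c else 0)"
    and x: "x \<in> c0 I"
  shows "\<phi> x = x k * c"
proof -
  have le: "\<bar>\<phi> x - x k * c\<bar> \<le> e * (1 + \<bar>c\<bar>)" if e: "e > 0" for e
  proof -
    define F where "F = {i\<in>I. e \<le> \<bar>x i\<bar>}"
    have fin: "finite F" using x e by (auto simp: c0_def F_def)
    define y where "y = (\<lambda>i. if i \<in> F then x i else 0)"
    define z where "z = (\<lambda>i. x i + (-1) * y i)"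
    have yc: "y \<in> c0 I" using fin by (intro c0_finsupp[of F]) (auto simp: y_def F_def)
    have zc: "z \<in> c0 I" unfolding z_def by (rule c0_add[OF x c0_scale[OF yc]])
    have xI: "\<And>i. i \<notin> I \<Longrightarrow> x i = 0" using x by (auto simp: c0_def)
    have zn: "c0_norm z \<le> e"
    proof (rule c0_norm_le)
      fix i
      show "\<bar>z i\<bar> \<le> e"
      proof (cases "i \<in> F")
        case True thus ?thesis using e by (simp add: z_def y_def)
      next
        case False
        have "\<bar>x i\<bar> \<le> e"
        proof (cases "i \<in> I")
          case True thus ?thesis using False by (simp add: F_def)
        next
          case False thus ?thesis using xI e by simp
        qed
        thus ?thesis using False by (simp add: z_def y_def)
      qed
    qed
    have xe: "(\<lambda>i. y i + z i) = x" by (auto simp: z_def)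
    have px: "\<phi> x = \<phi> y + \<phi> z" using add[OF yc zc] unfolding xe .
    have py: "\<phi> y = (if k \<in> F then x k * c else 0)"
    proof -
      have FI: "F \<subseteq> I" by (auto simp: F_def)
      have ys: "\<forall>i. i \<notin> F \<longrightarrow> y i = 0" by (simp add: y_def)
      have "\<phi> y = (if k \<in> F then y k * c else 0)"
        by (rule c0_eval_fin[of I \<phi> k c F y, OF add scale unit fin FI ys])
      thus ?thesis by (simp add: y_def)
    qed
    have pz: "\<bar>\<phi> z\<bar> \<le> e" using bnd[OF zc] zn by linarith
    show ?thesis
    proof (cases "k \<in> F")
      case True
      then have a: "\<bar>\<phi> x - x k * c\<bar> = \<bar>\<phi> z\<bar>" using px py by simp
      have b: "e * (1 + \<bar>c\<bar>) = e + e * \<bar>c\<bar>" by (simp add: algebra_simps)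
      have "0 \<le> e * \<bar>c\<bar>" using e by simp
      then show ?thesis using pz a b by linarith
    next
      case False
      have "\<bar>x k\<bar> \<le> e"
      proof (cases "k \<in> I")
        case True thus ?thesis using False by (simp add: F_def)
      next
        case False thus ?thesis using xI e by simp
      qed
      then have "\<bar>x k * c\<bar> \<le> e * \<bar>c\<bar>" by (simp add: abs_mult mult_right_mono)
      have "\<phi> x - x k * c = \<phi> z - x k * c" using px py False by simp
      moreover have "\<bar>\<phi> z - x k * c\<bar> \<le> \<bar>\<phi> z\<bar> + \<bar>x k * c\<bar>" by (rule abs_triangle_ineq4)
      moreover have "e * (1 + \<bar>c\<bar>) = e + e * \<bar>c\<bar>" by (simp add: algebra_simps)
      ultimately show ?thesis using pz \<open>\<bar>x k * c\<bar> \<le> e * \<bar>c\<bar>\<close> by linarith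
    qed
  qed
  show ?thesis
  proof (rule ccontr)
    assume "\<phi> x \<noteq> x k * c"
    then have d: "\<bar>\<phi> x - x k * c\<bar> > 0" by simp
    define e where "e = \<bar>\<phi> x - x k * c\<bar> / (2 * (1 + \<bar>c\<bar>))"
    have "e > 0" using d by (simp add: e_def)
    have pc: "1 + \<bar>c\<bar> > 0" by (simp add: add_pos_nonneg)
    have "e * (1 + \<bar>c\<bar>) = \<bar>\<phi> x - x k * c\<bar> / 2"
      unfolding e_def using pc by (simp add: field_simps)
    with le[OF \<open>e > 0\<close>] have "\<bar>\<phi> x - x k * c\<bar> \<le> \<bar>\<phi> x - x k * c\<bar> / 2"
      by simp
    thus False using d by simp
  qed
qed

theorem lemma2p3:
  fixes S :: "('i \<Rightarrow> real) \<Rightarrow> ('a::t2_space, real) bcontfun"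
    and I :: "'i set"
  assumes K_compact: "compact (UNIV :: 'a set)"
    and S_add: "\<And>x y. x \<in> c0 I \<Longrightarrow> y \<in> c0 I \<Longrightarrow> S (\<lambda>i. x i + y i) = S x + S y"
    and S_scale: "\<And>c x. x \<in> c0 I \<Longrightarrow> S (\<lambda>i. c * x i) = c *\<^sub>R S x"
    and S_isom: "\<And>x. x \<in> c0 I \<Longrightarrow> norm (S x) = c0_norm x"
  defines "G \<equiv> (\<Inter>i\<in>I. {t. apply_bcontfun (S (unit_vec i)) t = 0})"
  shows "complemented_in (S ` c0 I) (CKG G)"
proof -
  define \<xi> where "\<xi> j = apply_bcontfun (S (unit_vec j))" for j
  have addt: "\<And>x y. x \<in> c0 I \<Longrightarrow> y \<in> c0 I \<Longrightarrow>
      apply_bcontfun (S (\<lambda>i. x i + y i)) t = apply_bcontfun (S x) t + apply_bcontfun (S y) t" for t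
    using S_add by simp
  have scalet: "\<And>c x. x \<in> c0 I \<Longrightarrow>
      apply_bcontfun (S (\<lambda>i. c * x i)) t = c * apply_bcontfun (S x) t" for t
    using S_scale by simp
  have bndt: "\<And>x. x \<in> c0 I \<Longrightarrow> \<bar>apply_bcontfun (S x) t\<bar> \<le> c0_norm x" for t
  proof -
    fix x assume x: "x \<in> c0 I"
    have "norm (apply_bcontfun (S x) t) \<le> norm (S x)" by (rule norm_bounded)
    thus "\<bar>apply_bcontfun (S x) t\<bar> \<le> c0_norm x" using S_isom[OF x] by simp
  qed
  have nunit: "norm (S (unit_vec i)) = 1" if "i \<in> I" for i
  proof -
    have "c0_norm (unit_vec i) \<le> 1" by (rule c0_norm_le) (simp add: unit_vec_def)
    moreover have "\<bar>unit_vec i i\<bar> \<le> c0_norm (unit_vec i)"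
      by (rule c0_norm_ge[where b=1]) (simp add: unit_vec_def)
    ultimately show ?thesis using S_isom[OF unit_vec_c0[OF that]] by (simp add: unit_vec_def)
  qed
  have two: "\<bar>\<xi> i t + s * \<xi> j t\<bar> \<le> 1"
    if ij: "i \<in> I" "j \<in> I" "i \<noteq> j" and s: "\<bar>s\<bar> = 1" for i j t s
  proof -
    have ui: "unit_vec i \<in> c0 I" and uj: "unit_vec j \<in> c0 I" using ij by (auto intro: unit_vec_c0)
    define w where "w = (\<lambda>k. unit_vec i k + s * unit_vec j k)"
    have wc: "w \<in> c0 I" unfolding w_def by (rule c0_add[OF ui c0_scale[OF uj]])
    have "c0_norm w \<le> 1"
      by (rule c0_norm_le) (use ij s in \<open>simp add: w_def unit_vec_def\<close>)
    moreover have "apply_bcontfun (S w) t = \<xi> i t + s * \<xi> j t"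
      unfolding w_def \<xi>_def using addt[OF ui c0_scale[OF uj]] scalet[OF uj] by simp
    ultimately show ?thesis using bndt[OF wc, of t] by simp
  qed
  have "\<forall>i\<in>I. \<exists>t. \<bar>\<xi> i t\<bar> = 1"
  proof
    fix i assume i: "i \<in> I"
    have "continuous_on UNIV (\<lambda>t. \<bar>\<xi> i t\<bar>)"
      unfolding \<xi>_def by (intro continuous_on_rabs continuous_on_apply_bcontfun)
    then obtain t0 where t0: "\<forall>t. \<bar>\<xi> i t\<bar> \<le> \<bar>\<xi> i t0\<bar>"
      using continuous_attains_sup[OF K_compact] by blast
    have "norm (S (unit_vec i)) \<le> \<bar>\<xi> i t0\<bar>"
      by (rule norm_bound) (use t0 in \<open>simp add: \<xi>_def\<close>)
    moreover have "norm (apply_bcontfun (S (unit_vec i)) t0) \<le> norm (S (unit_vec i))"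
      by (rule norm_bounded)
    ultimately have "\<bar>\<xi> i t0\<bar> = 1" using nunit[OF i] by (simp add: \<xi>_def)
    thus "\<exists>t. \<bar>\<xi> i t\<bar> = 1" by blast
  qed
  then obtain T where T: "\<And>i. i \<in> I \<Longrightarrow> \<bar>\<xi> i (T i)\<bar> = 1" by metis
  have orth: "\<xi> j (T i) = 0" if "i \<in> I" "j \<in> I" "i \<noteq> j" for i j
  proof -
    have a: "\<bar>\<xi> i (T i)\<bar> = 1" using T that by simp
    have "\<bar>\<xi> i (T i) + 1 * \<xi> j (T i)\<bar> \<le> 1" by (rule two) (use that in auto)
    moreover have "\<bar>\<xi> i (T i) + (-1) * \<xi> j (T i)\<bar> \<le> 1" by (rule two) (use that in auto)
    ultimately show ?thesis using a by arith
  qed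
  define \<sigma> where "\<sigma> i = \<xi> i (T i)" for i
  have evalT: "apply_bcontfun (S x) (T i) = x i * \<sigma> i" if x: "x \<in> c0 I" and i: "i \<in> I" for x i
  proof (rule c0_eval[of I "\<lambda>x. apply_bcontfun (S x) (T i)", OF addt scalet bndt _ x])
    fix j assume j: "j \<in> I"
    show "apply_bcontfun (S (unit_vec j)) (T i) = (if j = i then \<sigma> i else 0)"
      using orth[OF i j] by (auto simp: \<sigma>_def \<xi>_def)
  qed
  have evalG: "apply_bcontfun (S x) t = 0" if x: "x \<in> c0 I" and t: "t \<in> G" for x t
  proof -
    have "apply_bcontfun (S x) t = x undefined * 0"
    proof (rule c0_eval[of I "\<lambda>x. apply_bcontfun (S x) t", OF addt scalet bndt _ x])
      fix j assume j: "j \<in> I"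
      show "apply_bcontfun (S (unit_vec j)) t = (if j = undefined then 0 else 0)"
        using t j by (simp add: G_def)
    qed
    thus ?thesis by simp
  qed
  have YZ: "S ` c0 I \<subseteq> CKG G" using evalG by (auto simp: CKG_def)
  define coef where "coef f = (\<lambda>i. if i \<in> I then apply_bcontfun f (T i) * \<sigma> i else 0)" for f
  define P where "P f = S (coef f)" for f
  have coefc: "coef f \<in> c0 I" if f: "f \<in> CKG G" for f
    unfolding c0_def
  proof (intro CollectI conjI allI impI)
    fix i assume "i \<notin> I" thus "coef f i = 0" by (simp add: coef_def)
  next
    fix e :: real assume e: "e > 0"
    define C where "C = {t. e \<le> \<bar>apply_bcontfun f t\<bar>}"
    have "closed C" unfolding C_def
      by (intro closed_Collect_le continuous_on_rabs continuous_on_apply_bcontfun continuous_on_const)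
    then have cC: "compact C" using compact_Int_closed[OF K_compact] by simp
    have cov: "C \<subseteq> (\<Union>j\<in>I. {t. \<xi> j t \<noteq> 0})"
    proof
      fix t assume "t \<in> C"
      then have "apply_bcontfun f t \<noteq> 0" using e by (auto simp: C_def)
      then have "t \<notin> G" using f by (auto simp: CKG_def)
      then show "t \<in> (\<Union>j\<in>I. {t. \<xi> j t \<noteq> 0})" by (auto simp: G_def \<xi>_def)
    qed
    have opn: "open {t. \<xi> j t \<noteq> 0}" for j
      unfolding \<xi>_def by (intro open_Collect_neq continuous_on_apply_bcontfun continuous_on_const)
    obtain C' where C': "C' \<subseteq> I" "finite C'" "C \<subseteq> (\<Union>j\<in>C'. {t. \<xi> j t \<noteq> 0})"
      using compactE_image[OF cC opn cov] by blast
    have "{i\<in>I. e \<le> \<bar>coef f i\<bar>} \<subseteq> C'"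
    proof
      fix i assume "i \<in> {i\<in>I. e \<le> \<bar>coef f i\<bar>}"
      then have i: "i \<in> I" and ei: "e \<le> \<bar>coef f i\<bar>" by auto
      have "\<bar>coef f i\<bar> = \<bar>apply_bcontfun f (T i)\<bar>"
        using T[OF i] i by (simp add: coef_def abs_mult \<sigma>_def)
      then have "T i \<in> C" using ei by (simp add: C_def)
      then obtain j where j: "j \<in> C'" "\<xi> j (T i) \<noteq> 0" using C'(3) by blast
      have "j = i" using orth[OF i _ _] j C'(1) by blast
      thus "i \<in> C'" using j by simp
    qed
    thus "finite {i\<in>I. e \<le> \<bar>coef f i\<bar>}" using C'(2) finite_subset by blast
  qed
  show ?thesis
    unfolding complemented_in_def
  proof (intro conjI exI[of _ P])
    show "S ` c0 I \<subseteq> CKG G" by (rule YZ)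
    show "\<forall>f\<in>CKG G. \<forall>g\<in>CKG G. P (f + g) = P f + P g"
    proof (intro ballI)
      fix f g assume f: "f \<in> CKG G" and g: "g \<in> CKG G"
      have "coef (f + g) = (\<lambda>i. coef f i + coef g i)"
        by (auto simp: coef_def distrib_right)
      thus "P (f + g) = P f + P g" unfolding P_def using S_add[OF coefc[OF f] coefc[OF g]] by simp
    qed
    show "\<forall>c. \<forall>f\<in>CKG G. P (c *\<^sub>R f) = c *\<^sub>R P f"
    proof (intro allI ballI)
      fix c f assume f: "f \<in> CKG G"
      have "coef (c *\<^sub>R f) = (\<lambda>i. c * coef f i)"
        by (auto simp: coef_def)
      thus "P (c *\<^sub>R f) = c *\<^sub>R P f" unfolding P_def using S_scale[OF coefc[OF f]] by simp
    qed
    show "\<exists>B. \<forall>f\<in>CKG G. norm (P f) \<le> B * norm f"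
    proof (intro exI[of _ 1] ballI)
      fix f assume f: "f \<in> CKG G"
      have "c0_norm (coef f) \<le> norm f"
      proof (rule c0_norm_le)
        fix i
        show "\<bar>coef f i\<bar> \<le> norm f"
        proof (cases "i \<in> I")
          case True
          have "norm (apply_bcontfun f (T i)) \<le> norm f" by (rule norm_bounded)
          thus ?thesis using T[OF True] True by (simp add: coef_def abs_mult \<sigma>_def)
        next
          case False thus ?thesis by (simp add: coef_def)
        qed
      qed
      thus "norm (P f) \<le> 1 * norm f" unfolding P_def using S_isom[OF coefc[OF f]] by simp
    qed
    show "P ` CKG G \<subseteq> S ` c0 I" unfolding P_def using coefc by blast
    show "\<forall>f\<in>S ` c0 I. P f = f"
    proof
      fix f assume "f \<in> S ` c0 I"
      then obtain x where x: "x \<in> c0 I" and fx: "f = S x" by blast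
      have "coef f = x"
      proof
        fix i
        show "coef f i = x i"
        proof (cases "i \<in> I")
          case True
          have "\<sigma> i * \<sigma> i = 1" using T[OF True] abs_mult_self_eq[of "\<sigma> i"] by (simp add: \<sigma>_def)
          then show ?thesis using evalT[OF x True] True by (simp add: coef_def fx mult.assoc)
        next
          case False thus ?thesis using x by (simp add: coef_def c0_def)
        qed
      qed
      thus "P f = f" by (simp add: P_def fx)
    qed
  qed
qed

end
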